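(* Let $k\ge1$ and $d\ge1$ be integers, let $f:\mathbb{R}\to\mathbb{R}$ be $(1,[0,1])$-triangle, and define $h:\mathbb{R}^d\to\mathbb{R}$ by $h(x):=f^k(x_1)$, where $f^k$ is the $k$-fold composition of $f$. For every $y\in\mathbb{R}^{d-1}$ define $p_y:\mathbb{R}\to\mathbb{R}^d$ by $p_y(z):=(z,y)$. Then there exist Borel probability measures $\mu$ and $\nu$ on $[0,1]^d$, where $\nu$ is the uniform distribution on $2^k+1$ points and $\mu$ is continuous and positive on exactly $[0,1]^d$ (it has a Lebesgue density positive on $[0,1]^d$ and zero elsewhere), such that every $g:\mathbb{R}^d\to\mathbb{R}$ with $\mathrm{Cr}(g\circ p_y)\le 2^{k-2}$ for every $y\in\mathbb{R}^{d-1}$ satisfies \[ \int|h-g|\,d\mu\ge\frac1{32},\qquad \int|\tilde h-\tilde g|\,d\mu\ge\frac18,\qquad \int|h-g|\,d\nu\ge\frac18,\qquad \int|\tilde h-\tilde g|\,d\nu\ge\frac14. \]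
   Context: For a real-valued function $u$ let $\tilde u(x)=\mathbf{1}[u(x)\ge1/2]$. For $u:\mathbb{R}\to\mathbb{R}$, the crossing number $\mathrm{Cr}(u)$ is the minimum number of intervals in a partition of $\mathbb{R}$ into intervals on each of which $\tilde u$ is constant. A function $f$ is $(t,[a,b])$-triangle if it is continuous on $[a,b]$ and there are points $a=a_1<a_2<\dots<a_{2t+1}=b$ with $f(a_i)=f(a_{i+2})$ for $1\le i\le 2t-1$, $f(a_1)=0$, $f(a_2)=1$, $f$ strictly increasing on $[a_i,a_{i+1}]$ for odd $i$ and strictly decreasing on $[a_i,a_{i+1}]$ for even $i$. *)

theory Defs
  imports "HOL-Analysis.Analysis" "HOL-Probability.Probability"
begin

definition thr :: "('a \<Rightarrow> real) \<Rightarrow> 'a \<Rightarrow> real" where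
  "thr u x = (if u x \<ge> 1/2 then 1 else 0)"

definition Cr :: "(real \<Rightarrow> real) \<Rightarrow> enat" where
  "Cr u = (INF P \<in> {P. finite P \<and> {} \<notin> P \<and> disjoint P \<and> \<Union>P = UNIV \<and>
              (\<forall>I\<in>P. is_interval I \<and> (\<forall>x\<in>I. \<forall>y\<in>I. thr u x = thr u y))}.
             enat (card P))"

text \<open>(t,[a,b])-triangle functions; the points a_1 < ... < a_(2t+1) are p 1, ..., p (2t+1).\<close>
definition triangle :: "nat \<Rightarrow> real \<Rightarrow> real \<Rightarrow> (real \<Rightarrow> real) \<Rightarrow> bool" where
  "triangle t a b f \<longleftrightarrow> continuous_on {a..b} f \<and>
     (\<exists>p::nat \<Rightarrow> real. p 1 = a \<and> p (2*t+1) = b \<and>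
        (\<forall>i\<in>{1..2*t}. p i < p (Suc i)) \<and>
        (\<forall>i\<in>{1..2*t-1}. f (p i) = f (p (i+2))) \<and>
        f (p 1) = 0 \<and> f (p 2) = 1 \<and>
        (\<forall>i\<in>{1..2*t}. (odd i \<longrightarrow> strict_mono_on {p i..p (Suc i)} f) \<and>
                        (even i \<longrightarrow> strict_antimono_on {p i..p (Suc i)} f)))"

text \<open>R^d is modelled as extensional functions on {..<d} (coordinate x_1 is x 0).\<close>
definition cube :: "nat \<Rightarrow> (nat \<Rightarrow> real) set" where
  "cube d = PiE {..<d} (\<lambda>_. {0..1})"

definition lift_pt :: "nat \<Rightarrow> (nat \<Rightarrow> real) \<Rightarrow> real \<Rightarrow> (nat \<Rightarrow> real)" where
  "lift_pt d y z = (\<lambda>i. if i = 0 then z else if i < d then y (i - 1) else undefined)"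

end

theory Submission
  imports Defs
begin


lemma tri_facts:
  assumes "triangle 1 0 1 f"
  obtains q where "0 < q" "q < 1" "f 0 = 0" "f 1 = 0" "f q = 1"
    "continuous_on {0..1} f" "\<And>x. x \<in> {0..1} \<Longrightarrow> f x \<in> {0..1}"
proof -
  from assms obtain p :: "nat \<Rightarrow> real" where c: "continuous_on {0..1} f" and
    p0: "p 1 = 0" "p 3 = 1" "\<forall>i\<in>{1..2}. p i < p (Suc i)"
    "\<forall>i\<in>{1..1}. f (p i) = f (p (i+2))" "f (p 1) = 0" "f (p 2) = 1"
    "\<forall>i\<in>{1..2}. (odd i \<longrightarrow> strict_mono_on {p i..p (Suc i)} f) \<and>
                        (even i \<longrightarrow> strict_antimono_on {p i..p (Suc i)} f)"
    unfolding triangle_def by auto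
  have p: "p 1 = 0" "p 3 = 1" "p 1 < p 2" "p 2 < p 3"
    "f (p 1) = f (p 3)" "f (p 1) = 0" "f (p 2) = 1"
    "strict_mono_on {p 1..p 2} f" "strict_antimono_on {p 2..p 3} f"
    using p0(1,2,5,6) p0(3)[rule_format, of 1] p0(3)[rule_format, of 2] p0(4)[rule_format, of 1]
      p0(7)[rule_format, of 1] p0(7)[rule_format, of 2]
    by (auto simp: numeral_3_eq_3 numeral_2_eq_2)
  define q where "q = p 2"
  have q: "0 < q" "q < 1" "f 0 = 0" "f 1 = 0" "f q = 1"
    "strict_mono_on {0..q} f" "strict_antimono_on {q..1} f"
    using p unfolding q_def by auto
  have m: "f x \<in> {0..1}" if "x \<in> {0..1}" for x
  proof (cases "x \<le> q")
    case True
    have "f 0 \<le> f x"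
    proof (cases "x = 0")
      case False thus ?thesis using monotone_onD[OF q(6), of 0 x] True that q by auto
    qed simp
    moreover have "f x \<le> f q"
    proof (cases "x = q")
      case False thus ?thesis using monotone_onD[OF q(6), of x q] True that q by auto
    qed simp
    ultimately show ?thesis using q by auto
  next
    case False
    have "f x \<ge> f 1"
    proof (cases "x = 1")
      case False thus ?thesis using monotone_onD[OF q(7), of x 1] \<open>\<not> x \<le> q\<close> that q by auto
    qed simp
    moreover have "f x \<le> f q" using monotone_onD[OF q(7), of q x] False that q by auto
    ultimately show ?thesis using q by auto
  qed
  show ?thesis
    apply (rule that[of q]) using q c m by auto
qed



locale tri =
  fixes f :: "real \<Rightarrow> real" and q :: real
  assumes q: "0 < q" "q < 1" and f0: "f 0 = 0" and f1: "f 1 = 0" and fq: "f q = 1"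
    and cont: "continuous_on {0..1} f" and into: "\<And>x. x \<in> {0..1} \<Longrightarrow> f x \<in> {0..1}"
begin

lemma iter_into: "x \<in> {0..1} \<Longrightarrow> (f^^k) x \<in> {0..1}"
proof (induction k)
  case (Suc k) thus ?case using into[of "(f^^k) x"] by simp
qed simp

lemma iter_cont: "continuous_on {0..1} (f^^k)"
proof (induction k)
  case 0 thus ?case by (simp add: continuous_on_id)
next
  case (Suc k)
  have "continuous_on {0..1} (f \<circ> (f^^k))"
    by (rule continuous_on_compose[OF Suc]) (auto intro: continuous_on_subset[OF cont] iter_into)
  thus ?case by simp
qed

lemma iter_points:
  "\<exists>t::nat\<Rightarrow>real. t 0 = 0 \<and> t (2^k) = 1 \<and> (\<forall>i<2^k. t i < t (Suc i)) \<and>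
     (\<forall>i\<le>2^k. (f^^k) (t i) = (if even i then 0 else 1))"
proof (induction k)
  case 0
  show ?case by (rule exI[of _ "\<lambda>i. real i"]) (auto simp: le_Suc_eq)
next
  case (Suc k)
  then obtain t :: "nat \<Rightarrow> real" where t: "t 0 = 0" "t (2^k) = 1" "\<forall>i<2^k. t i < t (Suc i)"
     "\<forall>i\<le>2^k. (f^^k) (t i) = (if even i then 0 else 1)" by blast
  have tmono: "t i \<le> t j" if "i \<le> j" "j \<le> 2^k" for i j
    using that
  proof (induction j)
    case (Suc j) thus ?case using t(3)[rule_format, of j] by (cases "i = Suc j") auto
  qed simp
  have trange: "t i \<in> {0..1}" if "i \<le> 2^k" for i
    using tmono[of 0 i] tmono[of i "2^k"] that t by auto
  have "\<exists>s. t i < s \<and> s < t (Suc i) \<and> (f^^k) s = q" if i: "i < 2^k" for i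
  proof -
    have sub: "{t i..t (Suc i)} \<subseteq> {0..1}" using trange[of i] trange[of "Suc i"] i by auto
    have c: "continuous_on {t i..t (Suc i)} (f^^k)" by (rule continuous_on_subset[OF iter_cont sub])
    have le: "t i \<le> t (Suc i)" using t(3) i by (auto intro: less_imp_le)
    obtain s where s: "t i \<le> s" "s \<le> t (Suc i)" "(f^^k) s = q"
    proof (cases "even i")
      case True
      hence "(f^^k) (t i) \<le> q" "q \<le> (f^^k) (t (Suc i))" using t(4) i q by auto
      thus ?thesis using IVT'[OF _ _ le c] that by blast
    next
      case False
      hence "(f^^k) (t (Suc i)) \<le> q" "q \<le> (f^^k) (t i)" using t(4) i q by auto
      thus ?thesis using IVT2'[OF _ _ le c] that by blast
    qed
    have "(f^^k) (t i) \<in> {0,1}" "(f^^k) (t (Suc i)) \<in> {0,1}" using t(4) i by auto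
    hence "s \<noteq> t i" "s \<noteq> t (Suc i)" using s(3) q by auto
    thus ?thesis using s by (intro exI[of _ s]) auto
  qed
  then obtain s where s: "\<And>i. i < 2^k \<Longrightarrow> t i < s i \<and> s i < t (Suc i) \<and> (f^^k) (s i) = q"
    by metis
  define t' where "t' j = (if even j then t (j div 2) else s (j div 2))" for j
  show ?case
  proof (intro exI[of _ t'] conjI allI impI)
    show "t' 0 = 0" using t by (simp add: t'_def)
    show "t' (2^Suc k) = 1" using t by (simp add: t'_def)
  next
    fix i :: nat assume i: "i < 2^Suc k"
    show "t' i < t' (Suc i)"
    proof (cases "even i")
      case True
      then have "i div 2 < 2^k" using i by auto
      thus ?thesis using s[of "i div 2"] True by (simp add: t'_def)
    next
      case False
      then have "i div 2 < 2^k" using i by auto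
      moreover have "Suc i div 2 = Suc (i div 2)" using False by presburger
      ultimately show ?thesis using s[of "i div 2"] False by (simp add: t'_def)
    qed
  next
    fix i :: nat assume i: "i \<le> 2^Suc k"
    show "(f^^Suc k) (t' i) = (if even i then 0 else 1)"
    proof (cases "even i")
      case True
      then have "i div 2 \<le> 2^k" using i by auto
      thus ?thesis using t(4) True f0 f1 by (auto simp: t'_def)
    next
      case False
      have "i \<noteq> 2 * 2^k" using False by auto
      then have "i div 2 < 2^k" using i by auto
      thus ?thesis using s[of "i div 2"] False fq by (simp add: t'_def)
    qed
  qed
qed

end



lemma Inf_enat_in: "(B::enat set) \<noteq> {} \<Longrightarrow> Inf B \<in> B"
  unfolding Inf_enat_def by (metis LeastI_ex ex_in_conv)

lemma Cr_witness:
  assumes "Cr u = enat c"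
  obtains P where "finite P" "{} \<notin> P" "disjoint P" "\<Union>P = UNIV"
    "\<And>I. I \<in> P \<Longrightarrow> is_interval I \<and> (\<forall>x\<in>I. \<forall>y\<in>I. thr u x = thr u y)" "card P = c"
proof -
  define A where "A = {P. finite P \<and> {} \<notin> P \<and> disjoint P \<and> \<Union>P = UNIV \<and>
              (\<forall>I\<in>P. is_interval I \<and> (\<forall>x\<in>I. \<forall>y\<in>I. thr u x = thr u y))}"
  define B where "B = (\<lambda>P. enat (card P)) ` A"
  have CB: "Cr u = Inf B" unfolding Cr_def A_def B_def by (rule refl)
  have ne: "B \<noteq> {}"
  proof
    assume "B = {}"
    hence "Cr u = \<infinity>" using CB by (simp add: Inf_enat_def)
    thus False using assms by simp
  qed
  have "Cr u \<in> B" using CB Inf_enat_in[OF ne] by simp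
  then obtain P where P: "Cr u = enat (card P)" "P \<in> A" unfolding B_def by (rule imageE)
  have "card P = c" using P(1) assms by simp
  moreover have "finite P" "{} \<notin> P" "disjoint P" "\<Union>P = UNIV"
    "\<And>I. I \<in> P \<Longrightarrow> is_interval I \<and> (\<forall>x\<in>I. \<forall>y\<in>I. thr u x = thr u y)"
    using P(2) unfolding A_def by blast+
  ultimately show ?thesis by (intro that)
qed

lemma discrete:
  fixes z :: "nat \<Rightarrow> real" and L :: "nat \<Rightarrow> real" and u :: "real \<Rightarrow> real"
  assumes inc: "\<forall>i<N. z i < z (Suc i)" and alt: "\<forall>i<N. L i \<noteq> L (Suc i)" and cr: "Cr u = enat c"
  shows "c \<ge> 1 \<and> N + 1 \<le> 2 * card {i. i \<le> N \<and> thr u (z i) \<noteq> L i} + c"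
proof -
  obtain P where P: "finite P" "{} \<notin> P" "disjoint P" "\<Union>P = UNIV"
    "\<And>I. I \<in> P \<Longrightarrow> is_interval I \<and> (\<forall>x\<in>I. \<forall>y\<in>I. thr u x = thr u y)" "card P = c"
    using Cr_witness[OF cr] by blast
  have Pne: "P \<noteq> {}" using P(4) by auto
  hence "card P > 0" using P(1) card_gt_0_iff by blast
  hence c1: "c \<ge> 1" using P(6) by simp
  define pc where "pc x = (SOME I. I \<in> P \<and> x \<in> I)" for x
  have pc: "pc x \<in> P \<and> x \<in> pc x" for x
    unfolding pc_def by (rule someI_ex) (use P(4) in blast)
  have pcu: "pc x = I" if "I \<in> P" "x \<in> I" for x I
    using P(3) pc[of x] that unfolding disjoint_def by blast
  have zmono: "z i \<le> z j" if "i \<le> j" "j \<le> N" for i j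
    using that
  proof (induction j)
    case (Suc j) thus ?case using inc[rule_format, of j] by (cases "i = Suc j") auto
  qed simp
  have conv: "pc (z m) = pc (z i)" if "i \<le> m" "m \<le> j" "j \<le> N" "pc (z i) = pc (z j)" for i m j
  proof -
    have "is_interval (pc (z i))" using P(5) pc by blast
    moreover have "z i \<in> pc (z i)" "z j \<in> pc (z i)" using pc that(4) by metis+
    moreover have "z i \<le> z m" "z m \<le> z j" using zmono that by auto
    ultimately have "z m \<in> pc (z i)" unfolding is_interval_1 by blast
    thus ?thesis using pcu pc by blast
  qed
  define Ch where "Ch = {i. i < N \<and> pc (z i) \<noteq> pc (z (Suc i))}"
  define B where "B = {i. i < N \<and> pc (z i) = pc (z (Suc i))}"
  define Err where "Err = {i. i \<le> N \<and> thr u (z i) \<noteq> L i}"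
  have inj: "inj_on (\<lambda>i. pc (z (Suc i))) Ch"
  proof (rule inj_onI)
    fix i j assume ij: "i \<in> Ch" "j \<in> Ch" "pc (z (Suc i)) = pc (z (Suc j))"
    show "i = j"
    proof (rule ccontr)
      assume "i \<noteq> j"
      then consider "i < j" | "j < i" by linarith
      thus False
      proof cases
        case 1
        hence "pc (z j) = pc (z (Suc i))" using conv[of "Suc i" j "Suc j"] ij unfolding Ch_def by auto
        thus False using ij unfolding Ch_def by auto
      next
        case 2
        hence "pc (z i) = pc (z (Suc j))" using conv[of "Suc j" i "Suc i"] ij unfolding Ch_def by auto
        thus False using ij unfolding Ch_def by auto
      qed
    qed
  qed
  have img: "(\<lambda>i. pc (z (Suc i))) ` Ch \<subseteq> P - {pc (z 0)}"
  proof
    fix I assume "I \<in> (\<lambda>i. pc (z (Suc i))) ` Ch"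
    then obtain i where i: "i \<in> Ch" and I: "I = pc (z (Suc i))" by blast
    have "pc (z (Suc i)) \<noteq> pc (z 0)"
    proof
    assume eq: "pc (z (Suc i)) = pc (z 0)"
    hence "pc (z i) = pc (z 0)" using conv[of 0 i "Suc i"] i unfolding Ch_def by auto
    thus False using eq i unfolding Ch_def by auto
    qed
    thus "I \<in> P - {pc (z 0)}" using I pc by blast
  qed
  have "card Ch \<le> card (P - {pc (z 0)})"
    using card_inj_on_le[OF inj img] P(1) by auto
  also have "\<dots> = c - 1" using P(1,6) pc by (simp add: card_Diff_singleton)
  finally have chc: "card Ch \<le> c - 1" .
  have "{..<N} = B \<union> Ch" "B \<inter> Ch = {}" unfolding B_def Ch_def by auto
  hence N: "N = card B + card Ch"
    by (metis card_Un_disjoint card_lessThan finite_Un finite_lessThan)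
  have "B \<subseteq> Err \<union> (\<lambda>j. j - 1) ` Err"
  proof
    fix i assume i: "i \<in> B"
    have e: "pc (z i) = pc (z (Suc i))" using i unfolding B_def by simp
    have "z i \<in> pc (z i)" "z (Suc i) \<in> pc (z i)" using pc[of "z i"] pc[of "z (Suc i)"] e by auto
    moreover have "\<forall>x\<in>pc (z i). \<forall>y\<in>pc (z i). thr u x = thr u y" using P(5) pc by blast
    ultimately have "thr u (z i) = thr u (z (Suc i))" by blast
    moreover have "L i \<noteq> L (Suc i)" using alt i unfolding B_def by auto
    ultimately have "i \<in> Err \<or> Suc i \<in> Err" using i unfolding B_def Err_def by auto
    thus "i \<in> Err \<union> (\<lambda>j. j - 1) ` Err" by (auto intro: image_eqI[of _ _ "Suc i"])
  qed
  moreover have fE: "finite Err" unfolding Err_def by auto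
  ultimately have "card B \<le> card (Err \<union> (\<lambda>j. j - 1) ` Err)" by (intro card_mono) auto
  also have "\<dots> \<le> card Err + card ((\<lambda>j. j - 1) ` Err)" by (rule card_Un_le)
  also have "\<dots> \<le> 2 * card Err" using card_image_le[OF fE, of "\<lambda>j. j - 1"] by simp
  finally show ?thesis using N chc c1 unfolding Err_def by linarith
qed



lemma psf_lborel: "product_sigma_finite (\<lambda>_::nat. lborel :: real measure)"
  unfolding product_sigma_finite_def by (simp add: lborel.sigma_finite_measure_axioms)

lemma upd_PiE:
  fixes d :: nat
  assumes "x \<in> extensional {1..<d}" "d \<ge> 1"
  shows "x(0 := z) \<in> PiE {..<d} S \<longleftrightarrow> z \<in> S 0 \<and> x \<in> PiE {1..<d} S"
proof
  assume h: "x(0 := z) \<in> PiE {..<d} S"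
  have "0 \<in> {..<d}" using assms(2) by simp
  from PiE_mem[OF h this] have "z \<in> S 0" by simp
  moreover have "x i \<in> S i" if "i \<in> {1..<d}" for i using PiE_mem[OF h, of i] that by simp
  ultimately show "z \<in> S 0 \<and> x \<in> PiE {1..<d} S" using assms(1) by (auto simp: PiE_iff)
next
  assume h: "z \<in> S 0 \<and> x \<in> PiE {1..<d} S"
  show "x(0 := z) \<in> PiE {..<d} S"
    unfolding PiE_iff
  proof (intro conjI ballI)
    fix i assume "i \<in> {..<d}" thus "(x(0 := z)) i \<in> S i" using h by (cases "i = 0") (auto simp: PiE_iff)
  next
    show "x(0 := z) \<in> extensional {..<d}" using h assms(2) by (auto simp: PiE_iff extensional_def)
  qed
qed

lemma lessThan_insert0: "(d::nat) \<ge> 1 \<Longrightarrow> {..<d} = insert 0 {1..<d}"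
  by auto

lemma fubini0:
  fixes d :: nat
  assumes "d \<ge> 1" and F: "F \<in> borel_measurable (PiM {..<d} (\<lambda>_. lborel :: real measure))"
  shows "(\<integral>\<^sup>+w. F w \<partial>PiM {..<d} (\<lambda>_. lborel)) =
    (\<integral>\<^sup>+x. (\<integral>\<^sup>+z. F (x(0 := z)) \<partial>lborel) \<partial>PiM {1..<d} (\<lambda>_. lborel))"
  using product_sigma_finite.product_nn_integral_insert[OF psf_lborel, of "{1..<d::nat}" 0 F]
     F lessThan_insert0[OF assms(1)] by simp

lemma shift_sum_bound:
  fixes G :: "real \<Rightarrow> ennreal" and a :: "nat \<Rightarrow> real"
  assumes G[measurable]: "G \<in> borel_measurable borel" and \<delta>: "\<delta> > 0"
    and C: "\<And>s. s \<in> {0..\<delta>} \<Longrightarrow> C \<le> (\<Sum>i<Np. G (a i + s))"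
  shows "C * ennreal \<delta> \<le> (\<integral>\<^sup>+z. (\<Sum>i<Np. indicator {a i..a i + \<delta>} z) * G z \<partial>lborel)"
proof -
  have "(\<integral>\<^sup>+z. (\<Sum>i<Np. indicator {a i..a i + \<delta>} z) * G z \<partial>lborel)
      = (\<Sum>i<Np. \<integral>\<^sup>+z. indicator {a i..a i + \<delta>} z * G z \<partial>lborel)"
    unfolding sum_distrib_right by (rule nn_integral_sum) (use G in auto)
  also have "\<dots> = (\<Sum>i<Np. \<integral>\<^sup>+s. indicator {0..\<delta>} s * G (a i + s) \<partial>lborel)"
  proof (rule sum.cong[OF refl])
    fix i
    have "(\<integral>\<^sup>+z. indicator {a i..a i + \<delta>} z * G z \<partial>lborel)
        = (\<integral>\<^sup>+s. indicator {a i..a i + \<delta>} (a i + 1 * s) * G (a i + 1 * s) \<partial>lborel)"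
      using nn_integral_real_affine[of "\<lambda>z. indicator {a i..a i + \<delta>} z * G z" 1 "a i"] G by simp
    also have "\<dots> = (\<integral>\<^sup>+s. indicator {0..\<delta>} s * G (a i + s) \<partial>lborel)"
      by (intro nn_integral_cong) (auto simp: indicator_def)
    finally show "(\<integral>\<^sup>+z. indicator {a i..a i + \<delta>} z * G z \<partial>lborel)
        = (\<integral>\<^sup>+s. indicator {0..\<delta>} s * G (a i + s) \<partial>lborel)" .
  qed
  also have "\<dots> = (\<integral>\<^sup>+s. indicator {0..\<delta>} s * (\<Sum>i<Np. G (a i + s)) \<partial>lborel)"
    by (subst nn_integral_sum[symmetric]) (auto simp: sum_distrib_left)
  also have "\<dots> \<ge> (\<integral>\<^sup>+s. indicator {0..\<delta>} s * C \<partial>lborel)"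
    by (intro nn_integral_mono) (auto simp: indicator_def C)
  moreover have "(\<integral>\<^sup>+s. indicator {0..\<delta>} s * C \<partial>lborel) = C * ennreal \<delta>"
    using \<delta> by (subst mult.commute) (simp add: nn_integral_cmult_indicator)
  ultimately show ?thesis by simp
qed


locale dens =
  fixes d Np :: nat and \<delta> :: real and a :: "nat \<Rightarrow> real"
  assumes d: "d \<ge> 1" and Np: "Np \<ge> 1" and \<delta>: "\<delta> > 0"
    and a: "\<And>i. i < Np \<Longrightarrow> 0 \<le> a i \<and> a i + \<delta> \<le> 1"
begin

definition K :: real where "K = 1 / (2 * real Np * \<delta>)"
definition r :: "real \<Rightarrow> ennreal" where
  "r z = ennreal (1/2) + ennreal K * (\<Sum>i<Np. indicator {a i..a i + \<delta>} z)"
definition \<rho> :: "(nat \<Rightarrow> real) \<Rightarrow> ennreal" where "\<rho> w = indicator (cube d) w * r (w 0)"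
definition C' :: "(nat \<Rightarrow> real) set" where "C' = PiE {1..<d} (\<lambda>_. {0..1})"

abbreviation "M \<equiv> PiM {..<d} (\<lambda>_. lborel :: real measure)"
abbreviation "M' \<equiv> PiM {1..<d} (\<lambda>_. lborel :: real measure)"

lemma K_pos: "K > 0" using Np \<delta> by (simp add: K_def)

lemma K_eq: "K = 1 / (2 * real Np * \<delta>)" by (simp add: K_def)

lemma r_meas[measurable]: "r \<in> borel_measurable borel"
  unfolding r_def by measurable

lemma cube_sets[measurable]: "cube d \<in> sets M"
  unfolding cube_def by (rule sets_PiM_I_finite) auto

lemma C'_sets[measurable]: "C' \<in> sets M'"
  unfolding C'_def by (rule sets_PiM_I_finite) auto

lemma comp0[measurable]: "(\<lambda>w::nat\<Rightarrow>real. w 0) \<in> borel_measurable M"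
  using measurable_component_singleton[of 0 "{..<d}" "\<lambda>_. lborel :: real measure"] d by simp

lemma \<rho>_meas[measurable]: "\<rho> \<in> borel_measurable M"
  unfolding \<rho>_def by measurable

lemma \<rho>_pos: "x \<in> cube d \<Longrightarrow> \<rho> x > 0"
  unfolding \<rho>_def r_def by (simp, intro add_pos_nonneg) (auto simp: ennreal_inverse_positive)

lemma \<rho>_zero: "x \<notin> cube d \<Longrightarrow> \<rho> x = 0"
  unfolding \<rho>_def by simp

lemma \<rho>_upd: "x \<in> space M' \<Longrightarrow> \<rho> (x(0 := z)) = indicator C' x * (indicator {0..1} z * r z)"
proof -
  assume x: "x \<in> space M'"
  hence "x \<in> extensional {1..<d}" by (simp add: space_PiM PiE_iff)
  from upd_PiE[OF this d, of z "\<lambda>_. {0..1}"]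
  have "(x(0 := z) \<in> cube d) = (z \<in> {0..1} \<and> x \<in> C')" unfolding cube_def C'_def by simp
  thus ?thesis unfolding \<rho>_def by (simp add: indicator_def)
qed

lemma upd_meas:
  assumes H[measurable]: "H \<in> borel_measurable M" and x: "x \<in> space M'"
  shows "(\<lambda>z. H (x(0 := z))) \<in> borel_measurable borel"
proof -
  have "(\<lambda>z. x(0 := z)) \<in> measurable lborel (PiM (insert 0 {1..<d}) (\<lambda>_. lborel :: real measure))"
    using measurable_component_update[OF x, of 0] by simp
  hence "(\<lambda>z. x(0 := z)) \<in> measurable borel M" using lessThan_insert0[OF d] by simp
  thus ?thesis using measurable_compose H by blast
qed

lemma key:
  assumes H[measurable]: "H \<in> borel_measurable M"
  shows "(\<integral>\<^sup>+w. H w \<partial>density M \<rho>) =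
    (\<integral>\<^sup>+x. indicator C' x * (\<integral>\<^sup>+z. indicator {0..1} z * r z * H (x(0 := z)) \<partial>lborel) \<partial>M')"
proof -
  have "(\<integral>\<^sup>+w. H w \<partial>density M \<rho>) = (\<integral>\<^sup>+w. \<rho> w * H w \<partial>M)"
    by (rule nn_integral_density) measurable
  also have "\<dots> = (\<integral>\<^sup>+x. (\<integral>\<^sup>+z. \<rho> (x(0 := z)) * H (x(0 := z)) \<partial>lborel) \<partial>M')"
    by (rule fubini0[OF d]) measurable
  also have "\<dots> = (\<integral>\<^sup>+x. indicator C' x * (\<integral>\<^sup>+z. indicator {0..1} z * r z * H (x(0 := z)) \<partial>lborel) \<partial>M')"
  proof (rule nn_integral_cong)
    fix x assume x: "x \<in> space M'"
    have "(\<integral>\<^sup>+z. \<rho> (x(0 := z)) * H (x(0 := z)) \<partial>lborel)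
      = (\<integral>\<^sup>+z. indicator C' x * (indicator {0..1} z * r z * H (x(0 := z))) \<partial>lborel)"
      by (intro nn_integral_cong) (simp add: \<rho>_upd[OF x] mult.assoc)
    also have "\<dots> = indicator C' x * (\<integral>\<^sup>+z. indicator {0..1} z * r z * H (x(0 := z)) \<partial>lborel)"
    proof -
      define G where "G = (\<lambda>z. H (x(0 := z)))"
      have [measurable]: "G \<in> borel_measurable borel" unfolding G_def by (rule upd_meas[OF H x])
      have "(\<lambda>z. indicator {0..1} z * r z * G z) \<in> borel_measurable lborel" by simp
      thus ?thesis unfolding G_def by (rule nn_integral_cmult)
    qed
    finally show "(\<integral>\<^sup>+z. \<rho> (x(0 := z)) * H (x(0 := z)) \<partial>lborel)
      = indicator C' x * (\<integral>\<^sup>+z. indicator {0..1} z * r z * H (x(0 := z)) \<partial>lborel)" .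
  qed
  finally show ?thesis .
qed

lemma C'_measure: "emeasure M' C' = 1"
proof -
  interpret product_sigma_finite "\<lambda>_::nat. lborel :: real measure" by (rule psf_lborel)
  show ?thesis unfolding C'_def by (subst emeasure_PiM) auto
qed

lemma r_int: "(\<integral>\<^sup>+z. indicator {0..1} z * r z \<partial>lborel) = 1"
proof -
  define f1 where "f1 = (\<lambda>z::real. ennreal (1/2) * indicator {0..1} z)"
  define g1 where "g1 = (\<lambda>z::real. ennreal K * (\<Sum>i<Np. indicator {a i..a i + \<delta>} z :: ennreal))"
  have [measurable]: "f1 \<in> borel_measurable borel" "g1 \<in> borel_measurable borel"
    unfolding f1_def g1_def by measurable
  have eq: "indicator {0..1} z * r z = f1 z + g1 z" for z
  proof (cases "z \<in> {0..1}")
    case True thus ?thesis unfolding r_def f1_def g1_def by simp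
  next
    case False
    hence "(\<Sum>i<Np. indicator {a i..a i + \<delta>} z :: ennreal) = 0"
      using a by (intro sum.neutral) (force simp: indicator_def)
    thus ?thesis using False unfolding f1_def g1_def by simp
  qed
  have "(\<integral>\<^sup>+z. indicator {0..1} z * r z \<partial>lborel) = (\<integral>\<^sup>+z. f1 z + g1 z \<partial>lborel)"
    unfolding eq ..
  also have "\<dots> = integral\<^sup>N lborel f1 + integral\<^sup>N lborel g1"
    by (rule nn_integral_add) auto
  also have "integral\<^sup>N lborel f1 = ennreal (1/2)"
    unfolding f1_def by (subst nn_integral_cmult_indicator) auto
  also have "integral\<^sup>N lborel g1 = ennreal K * (\<Sum>i<Np. \<integral>\<^sup>+z. indicator {a i..a i + \<delta>} z \<partial>lborel)"
    unfolding g1_def by (subst nn_integral_cmult) (auto simp del: nn_integral_indicator simp add: nn_integral_sum)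
  also have "(\<Sum>i<Np. \<integral>\<^sup>+z. indicator {a i..a i + \<delta>} z \<partial>lborel) = (\<Sum>i<Np. ennreal \<delta>)"
    using \<delta> by (intro sum.cong) auto
  also have "(\<Sum>i<Np. ennreal \<delta>) = ennreal (real Np * \<delta>)"
    using \<delta> by (simp add: ennreal_mult ennreal_of_nat_eq_real_of_nat)
  also have "ennreal K * ennreal (real Np * \<delta>) = ennreal (1/2)"
    using Np \<delta> by (simp add: ennreal_mult[symmetric] K_def)
  also have "ennreal (1/2) + ennreal (1/2) = ennreal (1/2 + 1/2)"
    by (rule ennreal_plus[symmetric]) auto
  finally show ?thesis by simp
qed

lemma prob: "prob_space (density M \<rho>)"
proof (rule prob_spaceI)
  have "emeasure (density M \<rho>) (space (density M \<rho>)) = (\<integral>\<^sup>+w. 1 \<partial>density M \<rho>)"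
    by simp
  also have "\<dots> = (\<integral>\<^sup>+x. indicator C' x * 1 \<partial>M')"
    by (subst key) (simp_all add: r_int)
  also have "\<dots> = 1" using C'_measure nn_integral_indicator[OF C'_sets] by simp
  finally show "emeasure (density M \<rho>) (space (density M \<rho>)) = 1" .
qed

lemma lower:
  assumes H[measurable]: "H \<in> borel_measurable M"
    and HC: "\<And>x s. x \<in> C' \<Longrightarrow> s \<in> {0..\<delta>} \<Longrightarrow> C \<le> (\<Sum>i<Np. H (x(0 := a i + s)))"
  shows "ennreal K * (C * ennreal \<delta>) \<le> (\<integral>\<^sup>+w. H w \<partial>density M \<rho>)"
proof -
  have "(\<integral>\<^sup>+x. indicator C' x * (ennreal K * (C * ennreal \<delta>)) \<partial>M') \<le>
    (\<integral>\<^sup>+x. indicator C' x * (\<integral>\<^sup>+z. indicator {0..1} z * r z * H (x(0 := z)) \<partial>lborel) \<partial>M')"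
  proof (rule nn_integral_mono)
    fix x assume x: "x \<in> space M'"
    show "indicator C' x * (ennreal K * (C * ennreal \<delta>)) \<le>
      indicator C' x * (\<integral>\<^sup>+z. indicator {0..1} z * r z * H (x(0 := z)) \<partial>lborel)"
    proof (cases "x \<in> C'")
      case True
      have G: "(\<lambda>z. H (x(0 := z))) \<in> borel_measurable borel" by (rule upd_meas[OF H x])
      have "C * ennreal \<delta> \<le> (\<integral>\<^sup>+z. (\<Sum>i<Np. indicator {a i..a i + \<delta>} z) * H (x(0 := z)) \<partial>lborel)"
        by (rule shift_sum_bound[OF G \<delta>]) (use HC True in auto)
      hence "ennreal K * (C * ennreal \<delta>) \<le>
        ennreal K * (\<integral>\<^sup>+z. (\<Sum>i<Np. indicator {a i..a i + \<delta>} z) * H (x(0 := z)) \<partial>lborel)"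
        by (rule mult_left_mono) simp
      also have "\<dots> = (\<integral>\<^sup>+z. ennreal K * ((\<Sum>i<Np. indicator {a i..a i + \<delta>} z) * H (x(0 := z))) \<partial>lborel)"
      proof -
        define G' where "G' = (\<lambda>z. H (x(0 := z)))"
        have [measurable]: "G' \<in> borel_measurable borel" unfolding G'_def by (rule G)
        have "(\<lambda>z. (\<Sum>i<Np. indicator {a i..a i + \<delta>} z) * G' z) \<in> borel_measurable lborel" by simp
        thus ?thesis unfolding G'_def by (rule nn_integral_cmult[symmetric])
      qed
      also have "\<dots> \<le> (\<integral>\<^sup>+z. indicator {0..1} z * r z * H (x(0 := z)) \<partial>lborel)"
      proof (rule nn_integral_mono)
        fix z :: real
        have "ennreal K * (\<Sum>i<Np. indicator {a i..a i + \<delta>} z) \<le> indicator {0..1} z * r z"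
        proof (cases "z \<in> {0..1}")
          case True thus ?thesis unfolding r_def by (simp add: add_increasing)
        next
          case False
          hence "(\<Sum>i<Np. indicator {a i..a i + \<delta>} z :: ennreal) = 0"
            using a by (intro sum.neutral) (force simp: indicator_def)
          thus ?thesis by simp
        qed
        thus "ennreal K * ((\<Sum>i<Np. indicator {a i..a i + \<delta>} z) * H (x(0 := z)))
            \<le> indicator {0..1} z * r z * H (x(0 := z))"
          by (metis mult.assoc mult_right_mono zero_le)
      qed
      finally show ?thesis using True by simp
    qed simp
  qed
  also have "\<dots> = (\<integral>\<^sup>+w. H w \<partial>density M \<rho>)" by (rule key[symmetric]) (rule H)
  finally have "(\<integral>\<^sup>+x. indicator C' x * (ennreal K * (C * ennreal \<delta>)) \<partial>M') \<le> (\<integral>\<^sup>+w. H w \<partial>density M \<rho>)" .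
  moreover have "(\<integral>\<^sup>+x. indicator C' x * (ennreal K * (C * ennreal \<delta>)) \<partial>M') = ennreal K * (C * ennreal \<delta>)"
  proof -
    have "(\<integral>\<^sup>+x. indicator C' x * (ennreal K * (C * ennreal \<delta>)) \<partial>M') = 
      (\<integral>\<^sup>+x. (ennreal K * (C * ennreal \<delta>)) * indicator C' x \<partial>M')"
      by (rule nn_integral_cong) (rule mult.commute)
    also have "\<dots> = ennreal K * (C * ennreal \<delta>) * emeasure M' C'"
      by (rule nn_integral_cmult_indicator[OF C'_sets])
    finally show ?thesis using C'_measure by simp
  qed
  ultimately show ?thesis by simp
qed

end



lemma count_bound:
  fixes z L :: "nat \<Rightarrow> real" and u :: "real \<Rightarrow> real" and k :: nat
  assumes k: "k \<ge> 1" and cr: "ereal_of_enat (Cr u) \<le> ereal (2 powr (real k - 2))"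
    and inc: "\<forall>i<2^k. z i < z (Suc i)" and alt: "\<forall>i<2^k. L i \<noteq> L (Suc i)"
  shows "2^k + 1 \<le> 4 * card {i. i \<le> 2^k \<and> thr u (z i) \<noteq> L i}"
proof -
  obtain c where c: "Cr u = enat c" using cr by (cases "Cr u") auto
  have rc: "real c \<le> 2 powr (real k - 2)" using cr c by simp
  from discrete[OF inc alt c] have c1: "c \<ge> 1" and E: "2^k + 1 \<le> 2 * card {i. i \<le> 2^k \<and> thr u (z i) \<noteq> L i} + c"
    by auto
  show ?thesis
  proof (cases "k = 1")
    case True
    hence "real c \<le> 1/2" using rc by (simp add: powr_minus_divide)
    thus ?thesis using c1 by simp
  next
    case False
    then obtain m where m: "k = m + 2" using k by (metis add.commute le_Suc_ex nat_le_iff_add one_add_one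
        Suc_eq_plus1 le_antisym not_less_eq_eq numeral_2_eq_2 plus_1_eq_Suc)
    have "2 powr (real k - 2) = 2 ^ m" using m by (simp add: powr_realpow)
    hence "c \<le> 2^m" using rc by (metis of_nat_le_iff of_nat_numeral of_nat_power)
    moreover have "(2::nat)^k = 4 * 2^m" using m by (simp add: power_add)
    ultimately show ?thesis using E by linarith
  qed
qed

lemma thr01: "thr u x = 0 \<or> thr u x = 1"
  unfolding thr_def by auto

lemma thr_L:
  assumes "L = 0 \<or> L = (1::real)" "\<bar>v - L\<bar> < 1/4"
  shows "thr (\<lambda>_. v) x = L"
  using assms unfolding thr_def by auto

lemma gap:
  assumes "L = 0 \<or> L = (1::real)" "\<bar>v - L\<bar> \<le> e" "thr g x \<noteq> L"
  shows "\<bar>v - g x\<bar> \<ge> 1/2 - e"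
  using assms unfolding thr_def by (auto split: if_splits)

lemma sum_card_bound:
  fixes e :: "nat \<Rightarrow> real"
  assumes "finite A" "E \<subseteq> A" "\<And>i. i \<in> A \<Longrightarrow> e i \<ge> 0" "\<And>i. i \<in> E \<Longrightarrow> e i \<ge> c"
  shows "c * card E \<le> (\<Sum>i\<in>A. e i)"
proof -
  have "c * card E = (\<Sum>i\<in>E. c)" by simp
  also have "\<dots> \<le> (\<Sum>i\<in>E. e i)" using assms(4) by (rule sum_mono)
  also have "\<dots> \<le> (\<Sum>i\<in>A. e i)" using assms by (intro sum_mono2) auto
  finally show ?thesis .
qed


lemma quarter: "ennreal (1 / numeral n) = 1 / numeral n"
proof -
  have "ennreal (1 / numeral n) = ennreal 1 / ennreal (numeral n)"
    by (rule divide_ennreal[symmetric]) auto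
  thus ?thesis by (simp only: ennreal_1 ennreal_numeral)
qed

lemma ediv: assumes "0 < n" "c * real n \<le> X" "0 \<le> c" shows "ennreal c \<le> ennreal X / of_nat n"
proof -
  have "0 \<le> c * real n" using assms(3) by simp
  hence X: "0 \<le> X" using assms(2) by linarith
  have "ennreal X / of_nat n = ennreal (X / real n)"
    using assms X by (simp add: ennreal_of_nat_eq_real_of_nat divide_ennreal)
  moreover have "c \<le> X / real n" using assms by (simp add: pos_le_divide_eq)
  ultimately show ?thesis by (simp add: ennreal_leI)
qed
lemma thr_meas[measurable]: "u \<in> borel_measurable M \<Longrightarrow> thr u \<in> borel_measurable M"
  unfolding thr_def by measurable

lemma lift_upd:
  fixes d :: nat
  assumes "x \<in> extensional {1..<d}" "d \<ge> 1"
  shows "lift_pt d (\<lambda>j. if j < d - 1 then x (Suc j) else undefined) z = x(0 := z)"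
  using assms unfolding lift_pt_def extensional_def by (auto simp: fun_eq_iff)

lemma emul: "K * (C * ennreal \<delta>) = ennreal c" if "K = ennreal (1 / (2 * real n * \<delta>))" "C = ennreal (real n * cq)" "\<delta> > 0" "n > 0" "c = cq / 2" "cq \<ge> 0"
proof -
  have "K * (C * ennreal \<delta>) = ennreal (1 / (2 * real n * \<delta>) * (real n * cq * \<delta>))"
    using that by (simp add: ennreal_mult[symmetric])
  also have "1 / (2 * real n * \<delta>) * (real n * cq * \<delta>) = c"
  proof -
    have "real n * \<delta> > 0" using that by simp
    thus ?thesis using that by (simp add: field_simps)
  qed
  finally show ?thesis .
qed


theorem theorem3p12:
  fixes k d :: nat and f :: "real \<Rightarrow> real"
  assumes "k \<ge> 1" and "d \<ge> 1" and "triangle 1 0 1 f"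
  defines "h \<equiv> (\<lambda>x::nat \<Rightarrow> real. (f ^^ k) (x 0))"
  shows "\<exists>(\<mu>::(nat \<Rightarrow> real) measure) (\<nu>::(nat \<Rightarrow> real) pmf) \<rho> S.
     \<rho> \<in> borel_measurable (PiM {..<d} (\<lambda>_. lborel)) \<and>
     (\<forall>x\<in>cube d. \<rho> x > 0) \<and>
     (\<forall>x\<in>space (PiM {..<d} (\<lambda>_. lborel)) - cube d. \<rho> x = 0) \<and>
     \<mu> = density (PiM {..<d} (\<lambda>_. lborel)) \<rho> \<and> prob_space \<mu> \<and>
     finite S \<and> S \<subseteq> cube d \<and> card S = 2 ^ k + 1 \<and> \<nu> = pmf_of_set S \<and>
     (\<forall>g::(nat \<Rightarrow> real) \<Rightarrow> real.
        g \<in> borel_measurable (PiM {..<d} (\<lambda>_. lborel)) \<and>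
        (\<forall>y\<in>PiE {..<d-1} (\<lambda>_. UNIV).
            ereal_of_enat (Cr (g \<circ> lift_pt d y)) \<le> ereal (2 powr (real k - 2)))
        \<longrightarrow>
        (\<integral>\<^sup>+x. ennreal \<bar>h x - g x\<bar> \<partial>\<mu>) \<ge> 1/32 \<and>
        (\<integral>\<^sup>+x. ennreal \<bar>thr h x - thr g x\<bar> \<partial>\<mu>) \<ge> 1/8 \<and>
        (\<integral>\<^sup>+x. ennreal \<bar>h x - g x\<bar> \<partial>measure_pmf \<nu>) \<ge> 1/8 \<and>
        (\<integral>\<^sup>+x. ennreal \<bar>thr h x - thr g x\<bar> \<partial>measure_pmf \<nu>) \<ge> 1/4)"
proof -
  note k = assms(1) and d = assms(2)
  obtain q where q: "0 < q" "q < 1" "f 0 = 0" "f 1 = 0" "f q = 1"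
    "continuous_on {0..1} f" "\<And>x. x \<in> {0..1} \<Longrightarrow> f x \<in> {0..1}"
    using tri_facts[OF assms(3)] by metis
  interpret T: tri f q using q by unfold_locales auto
  define N where "N = (2::nat)^k"
  define hk where "hk = f^^k"
  have hdef: "h x = hk (x 0)" for x unfolding h_def hk_def ..
  obtain t where t: "t 0 = 0" "t N = 1" "\<forall>i<N. t i < t (Suc i)"
    "\<forall>i\<le>N. hk (t i) = (if even i then 0 else 1)"
    using T.iter_points[of k] unfolding N_def hk_def by blast
  define L where "L i = (if even i then 0 else (1::real))" for i :: nat
  have Lalt: "\<forall>i<N. L i \<noteq> L (Suc i)" by (simp add: L_def)
  have L01: "L i = 0 \<or> L i = 1" for i by (simp add: L_def)
  have tL: "hk (t i) = L i" if "i \<le> N" for i using t(4) that by (simp add: L_def)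
  have tmono: "t i \<le> t j" if "i \<le> j" "j \<le> N" for i j
    using that
  proof (induction j)
    case (Suc j) thus ?case using t(3)[rule_format, of j] by (cases "i = Suc j") auto
  qed simp
  have trange: "t i \<in> {0..1}" if "i \<le> N" for i
    using tmono[of 0 i] tmono[of i N] that t by auto
  have hk_cont: "continuous_on {0..1} hk" unfolding hk_def by (rule T.iter_cont)
  have hk_into: "x \<in> {0..1} \<Longrightarrow> hk x \<in> {0..1}" for x unfolding hk_def by (rule T.iter_into)
  have "uniformly_continuous_on {0..1} hk"
    by (rule compact_uniformly_continuous[OF hk_cont compact_Icc])
  then obtain \<delta>0 where \<delta>0: "\<delta>0 > 0"
    "\<And>x x'. x \<in> {0..1} \<Longrightarrow> x' \<in> {0..1} \<Longrightarrow> dist x' x < \<delta>0 \<Longrightarrow> dist (hk x') (hk x) < 1/4"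
    unfolding uniformly_continuous_on_def by (metis zero_less_divide_1_iff zero_less_numeral)
  define \<delta> where "\<delta> = min (\<delta>0/2) (1/2)"
  have \<delta>: "\<delta> > 0" "\<delta> \<le> 1/2" "\<delta> < \<delta>0" using \<delta>0 by (auto simp: \<delta>_def)
  define a where "a i = (1 - \<delta>) * t i" for i
  have a_props: "0 \<le> a i \<and> a i + \<delta> \<le> 1" if "i < N + 1" for i
  proof -
    have "t i \<in> {0..1}" using trange that by simp
    moreover have "0 \<le> 1 - \<delta>" using \<delta> by simp
    ultimately have "(1 - \<delta>) * t i \<le> (1 - \<delta>) * 1" "0 \<le> (1 - \<delta>) * t i"
      by (simp_all add: mult_left_mono del: mult_1_right)
    thus ?thesis unfolding a_def by simp
  qed
  interpret D: dens d "N + 1" \<delta> a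
    by unfold_locales (use d \<delta> a_props in auto)
  have close: "a i + s \<in> {0..1} \<and> \<bar>hk (a i + s) - L i\<bar> < 1/4" if "i \<le> N" "s \<in> {0..\<delta>}" for i s
  proof -
    have ti: "t i \<in> {0..1}" using trange that by simp
    have in01: "a i + s \<in> {0..1}" using a_props[of i] that by auto
    have "\<bar>(a i + s) - t i\<bar> = \<bar>s - \<delta> * t i\<bar>" unfolding a_def by (simp add: algebra_simps)
    also have "\<dots> \<le> \<delta>"
    proof -
      have "\<delta> * t i \<le> \<delta> * 1" "0 \<le> \<delta> * t i" using ti \<delta>
        by (simp_all add: mult_left_mono del: mult_1_right)
      thus ?thesis using that(2) by (auto simp: abs_if)
    qed
    finally have "dist (a i + s) (t i) < \<delta>0" using \<delta> by (simp add: dist_real_def)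
    from \<delta>0(2)[OF ti in01 this] show ?thesis using tL[OF that(1)] in01 by (simp add: dist_real_def)
  qed
  have ainc: "\<forall>i<N. a i + s < a (Suc i) + s" for s
    using t(3) \<delta> by (auto simp: a_def)
  define hc where "hc z = hk (max 0 (min 1 z))" for z
  have "continuous_on UNIV hc" unfolding hc_def
    by (rule continuous_on_compose2[OF hk_cont]) (auto intro!: continuous_intros)
  hence hc_meas[measurable]: "hc \<in> borel_measurable borel" by (rule borel_measurable_continuous_onI)
  have hc_eq: "z \<in> {0..1} \<Longrightarrow> hc z = hk z" for z unfolding hc_def by simp
  define y0 where "y0 = (\<lambda>j::nat. if j < d - 1 then (0::real) else undefined)"
  have y0: "y0 \<in> PiE {..<d-1} (\<lambda>_. UNIV)" unfolding y0_def by (auto simp: PiE_iff extensional_def)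
  define lf where "lf z = lift_pt d y0 z" for z
  have lf0: "lf z 0 = z" for z unfolding lf_def lift_pt_def by simp
  have lf_cube: "z \<in> {0..1} \<Longrightarrow> lf z \<in> cube d" for z
    using d unfolding lf_def lift_pt_def cube_def y0_def by (auto simp: PiE_iff extensional_def)
  define S where "S = (\<lambda>i. lf (t i)) ` {..N}"
  have tinj: "inj_on t {..N}"
  proof (rule inj_onI)
    fix i j assume ij: "i \<in> {..N}" "j \<in> {..N}" "t i = t j"
    show "i = j"
    proof (rule ccontr)
      assume "i \<noteq> j"
      then consider "i < j" | "j < i" by linarith
      thus False
      proof cases
        case 1
        hence "i < N" using ij by auto
        hence "t i < t (Suc i)" using t(3) by blast
        moreover have "t (Suc i) \<le> t j" using tmono[of "Suc i" j] ij \<open>i < j\<close> by auto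
        ultimately show False using ij by simp
      next
        case 2
        hence "j < N" using ij by auto
        hence "t j < t (Suc j)" using t(3) by blast
        moreover have "t (Suc j) \<le> t i" using tmono[of "Suc j" i] ij \<open>j < i\<close> by auto
        ultimately show False using ij by simp
      qed
    qed
  qed
  have Sinj: "inj_on (\<lambda>i. lf (t i)) {..N}"
    using tinj unfolding inj_on_def by (metis lf0)
  have S_fin: "finite S" unfolding S_def by simp
  have S_card: "card S = 2^k + 1" unfolding S_def N_def[symmetric] using card_image[OF Sinj] by simp
  have S_cube: "S \<subseteq> cube d" unfolding S_def using lf_cube trange by auto
  have S_ne: "S \<noteq> {}" unfolding S_def by auto
  have gpart: "(\<integral>\<^sup>+x. ennreal \<bar>h x - g x\<bar> \<partial>density D.M D.\<rho>) \<ge> 1/32 \<and>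
        (\<integral>\<^sup>+x. ennreal \<bar>thr h x - thr g x\<bar> \<partial>density D.M D.\<rho>) \<ge> 1/8 \<and>
        (\<integral>\<^sup>+x. ennreal \<bar>h x - g x\<bar> \<partial>measure_pmf (pmf_of_set S)) \<ge> 1/8 \<and>
        (\<integral>\<^sup>+x. ennreal \<bar>thr h x - thr g x\<bar> \<partial>measure_pmf (pmf_of_set S)) \<ge> 1/4"
    if g: "g \<in> borel_measurable (PiM {..<d} (\<lambda>_. lborel))"
       "\<forall>y\<in>PiE {..<d-1} (\<lambda>_. UNIV). ereal_of_enat (Cr (g \<circ> lift_pt d y)) \<le> ereal (2 powr (real k - 2))"
    for g
  proof -
    note gm[measurable] = g(1)
    have cnt: "N + 1 \<le> 4 * card {i. i \<le> N \<and> thr (g \<circ> lift_pt d y) (z i) \<noteq> L i}"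
      if "y \<in> PiE {..<d-1} (\<lambda>_. UNIV)" "\<forall>i<N. z i < z (Suc i)" for y z
      using count_bound[OF k g(2)[rule_format, OF that(1)], of z L] that(2) Lalt unfolding N_def by simp
    define u0 where "u0 = g \<circ> lift_pt d y0"
    define Err0 where "Err0 = {i. i \<le> N \<and> thr u0 (t i) \<noteq> L i}"
    have cnt0: "N + 1 \<le> 4 * card Err0" unfolding Err0_def u0_def by (rule cnt[OF y0 t(3)])
    have cnt0r: "real (N + 1) \<le> 4 * real (card Err0)" using of_nat_mono[OF cnt0, where 'a=real] by simp
    have hpt: "h (lf (t i)) = L i" if "i \<le> N" for i using tL[OF that] by (simp add: hdef lf0)
    have thpt: "thr h (lf (t i)) = L i" if "i \<le> N" for i
      using hpt[OF that] L01[of i] unfolding thr_def by auto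
    have tgpt: "thr g (lf (t i)) = thr u0 (t i)" for i unfolding thr_def u0_def lf_def by simp
    have gpt: "g (lf (t i)) = u0 (t i)" for i unfolding u0_def lf_def by simp
    have pmf_sum: "(\<integral>\<^sup>+x. F x \<partial>measure_pmf (pmf_of_set S)) = (\<Sum>i\<le>N. F (lf (t i))) / of_nat (N + 1)"
      for F :: "_ \<Rightarrow> ennreal"
    proof -
      have "(\<integral>\<^sup>+x. F x \<partial>measure_pmf (pmf_of_set S)) = sum F S / of_nat (card S)"
        by (rule nn_integral_pmf_of_set[OF S_ne S_fin])
      also have "sum F S = (\<Sum>i\<le>N. F (lf (t i)))" unfolding S_def by (rule sum.reindex[OF Sinj, unfolded comp_def])
      also have "card S = N + 1" using S_card N_def by simp
      finally show ?thesis .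
    qed
    have nu_thr: "(\<integral>\<^sup>+x. ennreal \<bar>thr h x - thr g x\<bar> \<partial>measure_pmf (pmf_of_set S)) \<ge> 1/4"
    proof -
      have "real (card Err0) \<le> (\<Sum>i\<le>N. \<bar>thr h (lf (t i)) - thr g (lf (t i))\<bar>)" 
      proof -
        have "1 * real (card Err0) \<le> (\<Sum>i\<le>N. \<bar>thr h (lf (t i)) - thr g (lf (t i))\<bar>)"
        proof (rule sum_card_bound)
          fix i assume "i \<in> Err0"
          thus "1 \<le> \<bar>thr h (lf (t i)) - thr g (lf (t i))\<bar>"
            using thpt tgpt thr01[of u0 "t i"] L01[of i] unfolding Err0_def by auto
        qed (auto simp: Err0_def)
        thus ?thesis by simp
      qed
      hence "(1/4) * real (N + 1) \<le> (\<Sum>i\<le>N. \<bar>thr h (lf (t i)) - thr g (lf (t i))\<bar>)"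
        by (rule order_trans[rotated]) (use cnt0r in simp)
      hence "ennreal (1/4) \<le> ennreal (\<Sum>i\<le>N. \<bar>thr h (lf (t i)) - thr g (lf (t i))\<bar>) / of_nat (N + 1)"
        by (intro ediv) auto
      thus ?thesis by (simp add: pmf_sum quarter)
    qed
    have nu_abs: "(\<integral>\<^sup>+x. ennreal \<bar>h x - g x\<bar> \<partial>measure_pmf (pmf_of_set S)) \<ge> 1/8"
    proof -
      have "(1/2) * real (card Err0) \<le> (\<Sum>i\<le>N. \<bar>h (lf (t i)) - g (lf (t i))\<bar>)"
      proof (rule sum_card_bound)
        fix i assume i: "i \<in> Err0"
        have "\<bar>L i - u0 (t i)\<bar> \<ge> 1/2 - 0"
          by (rule gap[of "L i" "L i" 0 u0 "t i"]) (use L01 i in \<open>auto simp: Err0_def\<close>)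
        thus "1/2 \<le> \<bar>h (lf (t i)) - g (lf (t i))\<bar>" using hpt gpt i unfolding Err0_def by auto
      qed (auto simp: Err0_def)
      hence "(1/8) * real (N + 1) \<le> (\<Sum>i\<le>N. \<bar>h (lf (t i)) - g (lf (t i))\<bar>)"
        by (rule order_trans[rotated]) (use cnt0r in simp)
      hence "ennreal (1/8) \<le> ennreal (\<Sum>i\<le>N. \<bar>h (lf (t i)) - g (lf (t i))\<bar>) / of_nat (N + 1)"
        by (intro ediv) auto
      thus ?thesis by (simp add: pmf_sum quarter)
    qed
    have ptwise: "x(0 := a i + s) \<in> cube d \<and> \<bar>hc (a i + s) - L i\<bar> < 1/4 \<and>
        thr g (x(0 := a i + s)) = thr (g \<circ> lift_pt d (\<lambda>j. if j < d - 1 then x (Suc j) else undefined)) (a i + s) \<and>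
        g (x(0 := a i + s)) = (g \<circ> lift_pt d (\<lambda>j. if j < d - 1 then x (Suc j) else undefined)) (a i + s)"
      if "x \<in> D.C'" "i \<le> N" "s \<in> {0..\<delta>}" for x i s
    proof -
      have xe: "x \<in> extensional {1..<d}" using that(1) unfolding D.C'_def by (simp add: PiE_iff)
      have c: "a i + s \<in> {0..1}" "\<bar>hk (a i + s) - L i\<bar> < 1/4" using close[OF that(2,3)] by auto
      have "x(0 := a i + s) \<in> cube d"
        unfolding cube_def using upd_PiE[OF xe d, of "a i + s" "\<lambda>_. {0..1}"] that(1) c(1)
        unfolding D.C'_def by simp
      moreover have "thr g (x(0 := a i + s)) = thr (g \<circ> lift_pt d (\<lambda>j. if j < d - 1 then x (Suc j) else undefined)) (a i + s)"
        unfolding thr_def comp_def lift_upd[OF xe d] by (rule refl)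
      moreover have "g (x(0 := a i + s)) = (g \<circ> lift_pt d (\<lambda>j. if j < d - 1 then x (Suc j) else undefined)) (a i + s)"
        unfolding comp_def lift_upd[OF xe d] by (rule refl)
      moreover have "\<bar>hc (a i + s) - L i\<bar> < 1/4" using c hc_eq by simp
      ultimately show ?thesis by blast
    qed
    have yx: "(\<lambda>j. if j < d - 1 then x (Suc j) else undefined) \<in> PiE {..<d-1} (\<lambda>_. UNIV)" for x :: "nat \<Rightarrow> real"
      by (auto simp: PiE_iff extensional_def)
    have cube_h: "hc (w 0) = h w" if "w \<in> cube d" for w
    proof -
      have "0 \<in> {..<d}" using d by simp
      hence "w 0 \<in> {0..1}" using that unfolding cube_def by (auto simp: PiE_iff)
      thus ?thesis using hc_eq hdef by simp
    qed
    define Hthr where "Hthr w = indicator (cube d) w * ennreal \<bar>thr (\<lambda>w. hc (w 0)) w - thr g w\<bar>" for w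
    define Habs where "Habs w = indicator (cube d) w * ennreal \<bar>hc (w 0) - g w\<bar>" for w
    have Hthr_m[measurable]: "Hthr \<in> borel_measurable D.M" unfolding Hthr_def by measurable
    have Habs_m[measurable]: "Habs \<in> borel_measurable D.M" unfolding Habs_def by measurable
    have mu_thr: "(\<integral>\<^sup>+x. ennreal \<bar>thr h x - thr g x\<bar> \<partial>density D.M D.\<rho>) \<ge> 1/8"
    proof -
      have "ennreal (D.K) * (ennreal (real (N+1) * (1/4)) * ennreal \<delta>) \<le> (\<integral>\<^sup>+w. Hthr w \<partial>density D.M D.\<rho>)"
      proof (rule D.lower[OF Hthr_m])
        fix x s assume xs: "x \<in> D.C'" "s \<in> {0..\<delta>}"
        define u where "u = g \<circ> lift_pt d (\<lambda>j. if j < d - 1 then x (Suc j) else undefined)"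
        define Err where "Err = {i. i \<le> N \<and> thr u (a i + s) \<noteq> L i}"
        have cE: "N + 1 \<le> 4 * card Err" unfolding Err_def u_def by (rule cnt[OF yx ainc])
        have cEr: "real (N + 1) \<le> 4 * real (card Err)" using of_nat_mono[OF cE, where 'a=real] by simp
        have "1 * real (card Err) \<le> (\<Sum>i<N+1. \<bar>thr (\<lambda>w. hc (w 0)) (x(0 := a i + s)) - thr g (x(0 := a i + s))\<bar>)"
        proof (rule sum_card_bound)
          fix i assume i: "i \<in> Err"
          hence iN: "i \<le> N" unfolding Err_def by simp
          have "thr (\<lambda>w. hc (w 0)) (x(0 := a i + s)) = L i"
            using ptwise[OF xs(1) iN xs(2)] L01[of i] unfolding thr_def by auto
          thus "1 \<le> \<bar>thr (\<lambda>w. hc (w 0)) (x(0 := a i + s)) - thr g (x(0 := a i + s))\<bar>"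
            using ptwise[OF xs(1) iN xs(2)] i thr01[of u "a i + s"] L01[of i]
            unfolding Err_def u_def by auto
        qed (auto simp: Err_def)
        hence "real (N+1) * (1/4) \<le> (\<Sum>i<N+1. \<bar>thr (\<lambda>w. hc (w 0)) (x(0 := a i + s)) - thr g (x(0 := a i + s))\<bar>)"
          by (rule order_trans[rotated]) (use cEr in simp)
        hence "ennreal (real (N+1) * (1/4)) \<le> ennreal (\<Sum>i<N+1. \<bar>thr (\<lambda>w. hc (w 0)) (x(0 := a i + s)) - thr g (x(0 := a i + s))\<bar>)"
          by (rule ennreal_leI)
        also have "\<dots> = (\<Sum>i<N+1. ennreal \<bar>thr (\<lambda>w. hc (w 0)) (x(0 := a i + s)) - thr g (x(0 := a i + s))\<bar>)"
          by (rule sum_ennreal[symmetric]) simp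
        also have "\<dots> = (\<Sum>i<N+1. Hthr (x(0 := a i + s)))"
          by (intro sum.cong refl) (use ptwise[OF xs(1) _ xs(2)] in \<open>auto simp: Hthr_def\<close>)
        finally show "ennreal (real (N+1) * (1/4)) \<le> (\<Sum>i<N+1. Hthr (x(0 := a i + s)))" .
      qed
      also have "\<dots> \<le> (\<integral>\<^sup>+x. ennreal \<bar>thr h x - thr g x\<bar> \<partial>density D.M D.\<rho>)"
      proof (rule nn_integral_mono)
        fix w show "Hthr w \<le> ennreal \<bar>thr h w - thr g w\<bar>"
        proof (cases "w \<in> cube d")
          case True
          have "thr (\<lambda>w. hc (w 0)) w = thr h w" unfolding thr_def using cube_h[OF True] by simp
          thus ?thesis using True by (simp add: Hthr_def)
        qed (simp add: Hthr_def)
      qed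
      moreover have "ennreal (D.K) * (ennreal (real (N+1) * (1/4)) * ennreal \<delta>) = ennreal (1/8)"
        by (rule emul[where cq="1/4" and n="N+1"]) (use \<delta> in \<open>simp_all add: D.K_eq[simplified]\<close>)
      ultimately show ?thesis by (simp add: quarter)
    qed
    have mu_abs: "(\<integral>\<^sup>+x. ennreal \<bar>h x - g x\<bar> \<partial>density D.M D.\<rho>) \<ge> 1/32"
    proof -
      have "ennreal (D.K) * (ennreal (real (N+1) * (1/16)) * ennreal \<delta>) \<le> (\<integral>\<^sup>+w. Habs w \<partial>density D.M D.\<rho>)"
      proof (rule D.lower[OF Habs_m])
        fix x s assume xs: "x \<in> D.C'" "s \<in> {0..\<delta>}"
        define u where "u = g \<circ> lift_pt d (\<lambda>j. if j < d - 1 then x (Suc j) else undefined)"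
        define Err where "Err = {i. i \<le> N \<and> thr u (a i + s) \<noteq> L i}"
        have cE: "N + 1 \<le> 4 * card Err" unfolding Err_def u_def by (rule cnt[OF yx ainc])
        have cEr: "real (N + 1) \<le> 4 * real (card Err)" using of_nat_mono[OF cE, where 'a=real] by simp
        have "(1/4) * real (card Err) \<le> (\<Sum>i<N+1. \<bar>hc (a i + s) - g (x(0 := a i + s))\<bar>)"
        proof (rule sum_card_bound)
          fix i assume i: "i \<in> Err"
          hence iN: "i \<le> N" unfolding Err_def by simp
          have P: "\<bar>hc (a i + s) - L i\<bar> < 1/4" "g (x(0 := a i + s)) = u (a i + s)"
            using ptwise[OF xs(1) iN xs(2)] unfolding u_def by auto
          have "\<bar>hc (a i + s) - u (a i + s)\<bar> \<ge> 1/2 - 1/4"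
            by (rule gap[of "L i"]) (use L01 i P in \<open>auto simp: Err_def\<close>)
          thus "1/4 \<le> \<bar>hc (a i + s) - g (x(0 := a i + s))\<bar>" using P by simp
        qed (auto simp: Err_def)
        hence "real (N+1) * (1/16) \<le> (\<Sum>i<N+1. \<bar>hc (a i + s) - g (x(0 := a i + s))\<bar>)"
          by (rule order_trans[rotated]) (use cEr in simp)
        hence "ennreal (real (N+1) * (1/16)) \<le> ennreal (\<Sum>i<N+1. \<bar>hc (a i + s) - g (x(0 := a i + s))\<bar>)"
          by (rule ennreal_leI)
        also have "\<dots> = (\<Sum>i<N+1. ennreal \<bar>hc (a i + s) - g (x(0 := a i + s))\<bar>)"
          by (rule sum_ennreal[symmetric]) simp
        also have "\<dots> = (\<Sum>i<N+1. Habs (x(0 := a i + s)))"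
          by (intro sum.cong refl) (use ptwise[OF xs(1) _ xs(2)] in \<open>auto simp: Habs_def\<close>)
        finally show "ennreal (real (N+1) * (1/16)) \<le> (\<Sum>i<N+1. Habs (x(0 := a i + s)))" .
      qed
      also have "\<dots> \<le> (\<integral>\<^sup>+x. ennreal \<bar>h x - g x\<bar> \<partial>density D.M D.\<rho>)"
      proof (rule nn_integral_mono)
        fix w show "Habs w \<le> ennreal \<bar>h w - g w\<bar>"
        proof (cases "w \<in> cube d")
          case True
          thus ?thesis using cube_h[OF True] by (simp add: Habs_def)
        qed (simp add: Habs_def)
      qed
      moreover have "ennreal (D.K) * (ennreal (real (N+1) * (1/16)) * ennreal \<delta>) = ennreal (1/32)"
        by (rule emul[where cq="1/16" and n="N+1"]) (use \<delta> in \<open>simp_all add: D.K_eq[simplified]\<close>)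
      ultimately show ?thesis by (simp add: quarter)
    qed
    show ?thesis using mu_abs mu_thr nu_abs nu_thr by blast
  qed
  show ?thesis
    apply (rule exI[of _ "density D.M D.\<rho>"])
    apply (rule exI[of _ "pmf_of_set S"])
    apply (rule exI[of _ D.\<rho>])
    apply (rule exI[of _ S])
    apply (intro conjI)
    subgoal by (rule D.\<rho>_meas)
    subgoal using D.\<rho>_pos by blast
    subgoal using D.\<rho>_zero by blast
    subgoal by (rule refl)
    subgoal by (rule D.prob)
    subgoal by (rule S_fin)
    subgoal by (rule S_cube)
    subgoal by (rule S_card)
    subgoal by (rule refl)
    subgoal using gpart by blast
    done
qed

end
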